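(* Let $\rho$ be an invertible $n\times n$ density matrix (positive definite with $\mathrm{Tr}[\rho]=1$), let $A,B$ be $n\times n$ Hermitian matrices, and let $\alpha,\beta\ge 0$ satisfy either $\alpha+\beta\ge 1$ or $\alpha+\beta\le \tfrac12$. Then $$U_{\rho,\alpha,\beta}(A)\,U_{\rho,\alpha,\beta}(B)\ \ge\ \alpha\beta\,\bigl|\mathrm{Tr}[\rho[A,B]]\bigr|^2,$$ where $[A,B]=AB-BA$.
   Context: For a Hermitian matrix $H$ put $H_0=H-\mathrm{Tr}[\rho H]I$. Define $$I_{\rho,\alpha,\beta}(H)=\tfrac12\bigl\{\mathrm{Tr}[\rho H_0^2]+\mathrm{Tr}[\rho^{\alpha+\beta}H_0\rho^{1-\alpha-\beta}H_0]-\mathrm{Tr}[\rho^{\alpha}H_0\rho^{1-\alpha}H_0]-\mathrm{Tr}[\rho^{\beta}H_0\rho^{1-\beta}H_0]\bigr\},$$ $$J_{\rho,\alpha,\beta}(H)=\tfrac12\bigl\{\mathrm{Tr}[\rho H_0^2]+\mathrm{Tr}[\rho^{\alpha+\beta}H_0\rho^{1-\alpha-\beta}H_0]+\mathrm{Tr}[\rho^{\alpha}H_0\rho^{1-\alpha}H_0]+\mathrm{Tr}[\rho^{\beta}H_0\rho^{1-\beta}H_0]\bigr\},$$ and $U_{\rho,\alpha,\beta}(H)=\sqrt{I_{\rho,\alpha,\beta}(H)\,J_{\rho,\alpha,\beta}(H)}$. Real powers of $\rho$ are defined by functional calculus (well defined since $\rho$ is invertible); $\alpha+\beta\le 1$ is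 not required. *)

theory Defs
  imports Complex_Main "Jordan_Normal_Form.Matrix"
begin

definition cadj :: "complex mat \<Rightarrow> complex mat" where
  "cadj A = mat (dim_col A) (dim_row A) (\<lambda>(i,j). cnj (A $$ (j,i)))"

definition mtrace :: "complex mat \<Rightarrow> complex" where
  "mtrace A = (\<Sum>i<dim_row A. A $$ (i,i))"

definition hermitian_mat :: "nat \<Rightarrow> complex mat \<Rightarrow> bool" where
  "hermitian_mat n A \<longleftrightarrow> A \<in> carrier_mat n n \<and> cadj A = A"

definition unitary_mat :: "nat \<Rightarrow> complex mat \<Rightarrow> bool" where
  "unitary_mat n U \<longleftrightarrow> U \<in> carrier_mat n n \<and> U * cadj U = 1\<^sub>m n \<and> cadj U * U = 1\<^sub>m n"

definition qform :: "nat \<Rightarrow> complex mat \<Rightarrow> complex vec \<Rightarrow> complex" where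
  "qform n A v = (\<Sum>i<n. \<Sum>j<n. cnj (v $ i) * A $$ (i,j) * v $ j)"

definition posdef_mat :: "nat \<Rightarrow> complex mat \<Rightarrow> bool" where
  "posdef_mat n A \<longleftrightarrow> hermitian_mat n A \<and>
     (\<forall>v \<in> carrier_vec n. v \<noteq> 0\<^sub>v n \<longrightarrow> qform n A v \<in> \<real> \<and> Re (qform n A v) > 0)"

definition density_mat :: "nat \<Rightarrow> complex mat \<Rightarrow> bool" where
  "density_mat n \<rho> \<longleftrightarrow> posdef_mat n \<rho> \<and> invertible_mat \<rho> \<and> mtrace \<rho> = 1"

definition mpow :: "nat \<Rightarrow> complex mat \<Rightarrow> real \<Rightarrow> complex mat" where
  "mpow n \<rho> t = (SOME M. \<exists>U d. unitary_mat n U \<and> (\<forall>i<n. d i > 0) \<and>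
      \<rho> = U * mat_diag n (\<lambda>i. complex_of_real (d i)) * cadj U \<and>
      M = U * mat_diag n (\<lambda>i. complex_of_real (d i powr t)) * cadj U)"

definition centered :: "nat \<Rightarrow> complex mat \<Rightarrow> complex mat \<Rightarrow> complex mat" where
  "centered n \<rho> H = H - mtrace (\<rho> * H) \<cdot>\<^sub>m 1\<^sub>m n"

definition skewterm :: "nat \<Rightarrow> complex mat \<Rightarrow> real \<Rightarrow> complex mat \<Rightarrow> complex" where
  "skewterm n \<rho> a H0 = mtrace (mpow n \<rho> a * H0 * mpow n \<rho> (1 - a) * H0)"

definition Ifun :: "nat \<Rightarrow> complex mat \<Rightarrow> real \<Rightarrow> real \<Rightarrow> complex mat \<Rightarrow> real" where
  "Ifun n \<rho> \<alpha> \<beta> H = (let H0 = centered n \<rho> H in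
     Re (mtrace (\<rho> * (H0 * H0)) + skewterm n \<rho> (\<alpha> + \<beta>) H0
         - skewterm n \<rho> \<alpha> H0 - skewterm n \<rho> \<beta> H0) / 2)"

definition Jfun :: "nat \<Rightarrow> complex mat \<Rightarrow> real \<Rightarrow> real \<Rightarrow> complex mat \<Rightarrow> real" where
  "Jfun n \<rho> \<alpha> \<beta> H = (let H0 = centered n \<rho> H in
     Re (mtrace (\<rho> * (H0 * H0)) + skewterm n \<rho> (\<alpha> + \<beta>) H0
         + skewterm n \<rho> \<alpha> H0 + skewterm n \<rho> \<beta> H0) / 2)"

definition Ufun :: "nat \<Rightarrow> complex mat \<Rightarrow> real \<Rightarrow> real \<Rightarrow> complex mat \<Rightarrow> real" where
  "Ufun n \<rho> \<alpha> \<beta> H = sqrt (Ifun n \<rho> \<alpha> \<beta> H * Jfun n \<rho> \<alpha> \<beta> H)"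

end

theory Submission
  imports Defs "Jordan_Normal_Form.Schur_Decomposition"
begin

lemma sinh_ratio_aux:
  fixes l z :: real assumes l: "0 \<le> l" "l \<le> 1" and z: "0 \<le> z"
  shows "sinh (l * z) \<le> l * sinh z"
proof -
  let ?g = "\<lambda>t::real. l * sinh t - sinh (l * t)"
  have "?g 0 \<le> ?g z"
  proof (rule DERIV_nonneg_imp_nondecreasing[OF z])
    fix x :: real assume x: "0 \<le> x" "x \<le> z"
    have "(?g has_real_derivative (l * cosh x - cosh (l * x) * l)) (at x)"
      by (auto intro!: derivative_eq_intros)
    moreover have "cosh (l * x) \<le> cosh x"
      using x l by (subst cosh_real_nonneg_le_iff) (auto simp: mult_left_le_one_le)
    hence "0 \<le> l * cosh x - cosh (l * x) * l" using l by (simp add: algebra_simps mult_left_mono)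
    ultimately show "\<exists>y. (?g has_real_derivative y) (at x) \<and> 0 \<le> y" by blast
  qed
  thus ?thesis by simp
qed

lemma sinh_ratio:
  fixes a b u :: real assumes "0 \<le> a" "a \<le> b" "0 \<le> u"
  shows "b * sinh (a * u) \<le> a * sinh (b * u)"
proof (cases "b = 0")
  case True thus ?thesis using assms by simp
next
  case False
  hence b: "b > 0" using assms by simp
  have "sinh ((a/b) * (b*u)) \<le> (a/b) * sinh (b*u)"
    by (rule sinh_ratio_aux) (use assms b in auto)
  hence "sinh (a*u) \<le> (a * sinh (b*u)) / b" using b by simp
  thus ?thesis using b by (simp add: pos_le_divide_eq mult.commute)
qed

lemma sinh_sum_diff: "sinh ((x::real) + y) * sinh (x - y) = sinh x ^ 2 - sinh y ^ 2"
proof -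
  have "sinh (x + y) * sinh (x - y) = (sinh x * cosh y + cosh x * sinh y) * (sinh x * cosh y - cosh x * sinh y)"
    using sinh_add[of x "-y"] by (simp add: sinh_add)
  also have "\<dots> = sinh x ^ 2 * cosh y ^ 2 - cosh x ^ 2 * sinh y ^ 2" by (simp add: power2_eq_square algebra_simps)
  also have "\<dots> = sinh x ^ 2 - sinh y ^ 2" by (simp add: cosh_square_eq algebra_simps)
  finally show ?thesis .
qed

lemma sinh_cosh_prod: "2 * sinh (x::real) * cosh y = sinh (x + y) + sinh (x - y)"
  using sinh_add[of x y] sinh_add[of x "-y"] by simp

lemma key_sinh_pos:
  fixes a b u :: real
  assumes a: "0 \<le> a" and b: "0 \<le> b" and u: "0 \<le> u"
    and cond: "a + b \<ge> 1 \<or> a + b \<le> 1/2"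
  shows "4 * a * b * sinh u ^ 2 \<le> sinh (2*a*u) * sinh (2*b*u) * cosh ((1-(a+b))*u) ^ 2"
proof -
  define s where "s = a + b"
  define d where "d = a - b"
  have s0: "0 \<le> s" using a b s_def by simp
  have ds: "\<bar>d\<bar> \<le> s" using a b unfolding s_def d_def by simp
  have prod: "sinh (2*a*u) * sinh (2*b*u) = sinh (s*u) ^ 2 - sinh (d*u) ^ 2"
    using sinh_sum_diff[of "s*u" "d*u"] unfolding s_def d_def by (simp add: algebra_simps)
  have ab: "4 * a * b = s^2 - d^2" unfolding s_def d_def by (simp add: power2_eq_square algebra_simps)
  have m1: "s * sinh (\<bar>d\<bar> * u) \<le> \<bar>d\<bar> * sinh (s * u)"
    by (rule sinh_ratio) (use ds u in auto)
  have "0 \<le> s * sinh (\<bar>d\<bar> * u)" using s0 u by simp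
  hence "(s * sinh (\<bar>d\<bar> * u))^2 \<le> (\<bar>d\<bar> * sinh (s * u))^2" using m1 by (intro power_mono) auto
  moreover have "sinh (\<bar>d\<bar> * u) ^ 2 = sinh (d * u) ^ 2"
    by (cases "d \<ge> 0") (auto simp: abs_if)
  ultimately have m2: "s^2 * sinh (d*u)^2 \<le> d^2 * sinh (s*u)^2" by (simp add: power_mult_distrib)
  have step3: "4*a*b * sinh (s*u)^2 \<le> s^2 * (sinh (2*a*u) * sinh (2*b*u))"
    unfolding prod ab using m2 by (simp add: algebra_simps)
  have step4: "s * sinh u \<le> sinh (s*u) * cosh ((1-s)*u)"
  proof -
    have e: "2 * (sinh (s*u) * cosh ((1-s)*u)) = sinh u + sinh ((2*s-1)*u)"
      using sinh_cosh_prod[of "s*u" "(1-s)*u"] by (simp add: algebra_simps)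
    have "2 * (s * sinh u) \<le> sinh u + sinh ((2*s-1)*u)"
    proof (cases "s \<ge> 1")
      case True
      have "(2*s-1) * sinh (1*u) \<le> 1 * sinh ((2*s-1)*u)"
        by (rule sinh_ratio) (use True u in auto)
      thus ?thesis by (simp add: algebra_simps)
    next
      case False
      hence sl: "s \<le> 1/2" using cond s_def by auto
      have "1 * sinh ((1-2*s)*u) \<le> (1-2*s) * sinh (1*u)"
        by (rule sinh_ratio) (use sl s0 u in auto)
      moreover have "sinh ((2*s-1)*u) = - sinh ((1-2*s)*u)"
        by (metis minus_diff_eq mult_minus_left sinh_minus)
      ultimately show ?thesis by (simp add: algebra_simps)
    qed
    thus ?thesis using e by simp
  qed
  have "0 \<le> s * sinh u" using s0 u by simp
  hence step4': "(s * sinh u)^2 \<le> (sinh (s*u) * cosh ((1-s)*u))^2"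
    using step4 by (intro power_mono) auto
  have "s^2 * (4*a*b * sinh u^2) = 4*a*b * (s * sinh u)^2" by (simp add: power_mult_distrib)
  also have "\<dots> \<le> 4*a*b * (sinh (s*u) * cosh ((1-s)*u))^2"
    using step4' a b by (intro mult_left_mono) auto
  also have "\<dots> = (4*a*b * sinh (s*u)^2) * cosh ((1-s)*u)^2" by (simp add: power_mult_distrib)
  also have "\<dots> \<le> (s^2 * (sinh (2*a*u) * sinh (2*b*u))) * cosh ((1-s)*u)^2"
    using step3 by (intro mult_right_mono) auto
  finally have fin: "s^2 * (4*a*b * sinh u^2) \<le> s^2 * (sinh (2*a*u) * sinh (2*b*u) * cosh ((1-s)*u)^2)"
    by (simp add: algebra_simps)
  show ?thesis
  proof (cases "s = 0")
    case True
    hence "a = 0" "b = 0" using a b s_def by auto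
    thus ?thesis by simp
  next
    case False
    hence "s^2 > 0" by simp
    thus ?thesis using fin unfolding s_def by simp
  qed
qed

lemma key_sinh:
  fixes a b u :: real
  assumes a: "0 \<le> a" and b: "0 \<le> b"
    and cond: "a + b \<ge> 1 \<or> a + b \<le> 1/2"
  shows "4 * a * b * sinh u ^ 2 \<le> sinh (2*a*u) * sinh (2*b*u) * cosh ((1-(a+b))*u) ^ 2"
proof (cases "u \<ge> 0")
  case True thus ?thesis using key_sinh_pos[OF a b True cond] by simp
next
  case False
  have "4 * a * b * sinh (-u) ^ 2 \<le> sinh (2*a*(-u)) * sinh (2*b*(-u)) * cosh ((1-(a+b))*(-u)) ^ 2"
    by (rule key_sinh_pos[OF a b _ cond]) (use False in simp)
  thus ?thesis by (simp only: mult_minus_right sinh_minus cosh_minus) (simp add: power2_eq_square)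
qed

lemma powr_pm_exp:
  fixes x y c :: real assumes x: "x > 0" and y: "y > 0"
  defines "m \<equiv> (ln x + ln y)/2" and "u \<equiv> (ln x - ln y)/2"
  shows "x powr c - y powr c = exp (c*m) * (2 * sinh (c*u))"
    and "x powr c + y powr c = exp (c*m) * (2 * cosh (c*u))"
proof -
  have ex: "x powr c = exp (c*m) * exp (c*u)" using x
    unfolding powr_def m_def u_def by (simp add: exp_add[symmetric] algebra_simps add_divide_distrib[symmetric])
  have ey: "y powr c = exp (c*m) * exp (-(c*u))" using y
    unfolding powr_def m_def u_def by (simp add: exp_add[symmetric] algebra_simps diff_divide_distrib[symmetric] add_divide_distrib[symmetric])
  show "x powr c - y powr c = exp (c*m) * (2 * sinh (c*u))"
    unfolding ex ey sinh_def by (simp add: algebra_simps)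
  show "x powr c + y powr c = exp (c*m) * (2 * cosh (c*u))"
    unfolding ex ey cosh_def by (simp add: algebra_simps)
qed

lemma key_xy:
  fixes x y a b :: real
  assumes x: "x > 0" and y: "y > 0" and a: "0 \<le> a" and b: "0 \<le> b"
    and cond: "a + b \<ge> 1 \<or> a + b \<le> 1/2"
  shows "16 * a * b * (x - y)^2 \<le>
     ((x powr a - y powr a) * (x powr b - y powr b) * (x powr (1-(a+b)) + y powr (1-(a+b)))) *
     ((x powr a + y powr a) * (x powr b + y powr b) * (x powr (1-(a+b)) + y powr (1-(a+b))))"
proof -
  define m where "m = (ln x + ln y)/2"
  define u where "u = (ln x - ln y)/2"
  note E = powr_pm_exp[OF x y, folded m_def u_def]
  have x1: "x - y = exp (1*m) * (2 * sinh (1*u))" using E(1)[of 1] x y by simp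
  have "((x powr a - y powr a) * (x powr b - y powr b) * (x powr (1-(a+b)) + y powr (1-(a+b)))) *
     ((x powr a + y powr a) * (x powr b + y powr b) * (x powr (1-(a+b)) + y powr (1-(a+b))))
    = (exp (a*m) * exp (a*m) * exp (b*m) * exp (b*m) * exp ((1-(a+b))*m) * exp ((1-(a+b))*m)) *
      (16 * ((2 * sinh (a*u) * cosh (a*u)) * (2 * sinh (b*u) * cosh (b*u)) * cosh ((1-(a+b))*u) ^ 2))"
    unfolding E by (simp add: power2_eq_square algebra_simps)
  also have "exp (a*m) * exp (a*m) * exp (b*m) * exp (b*m) * exp ((1-(a+b))*m) * exp ((1-(a+b))*m) = exp (2*m)"
    by (simp add: exp_add[symmetric] algebra_simps)
  also have "2 * sinh (a*u) * cosh (a*u) = sinh (2*a*u)" using sinh_add[of "a*u" "a*u"] by (simp add: algebra_simps)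
  also have "2 * sinh (b*u) * cosh (b*u) = sinh (2*b*u)" using sinh_add[of "b*u" "b*u"] by (simp add: algebra_simps)
  finally have R: "((x powr a - y powr a) * (x powr b - y powr b) * (x powr (1-(a+b)) + y powr (1-(a+b)))) *
     ((x powr a + y powr a) * (x powr b + y powr b) * (x powr (1-(a+b)) + y powr (1-(a+b))))
     = exp (2*m) * (16 * (sinh (2*a*u) * sinh (2*b*u) * cosh ((1-(a+b))*u) ^ 2))" .
  have L: "16 * a * b * (x - y)^2 = exp (2*m) * (16 * (4 * a * b * sinh u ^ 2))"
    unfolding x1 by (simp add: power2_eq_square exp_add[symmetric] algebra_simps)
  show ?thesis unfolding R L
    using key_sinh[OF a b cond, of u] by (intro mult_left_mono) auto
qed

lemma cauchy_schwarz_sum: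
  fixes u v :: "'a \<Rightarrow> real" assumes "finite S"
  shows "(\<Sum>i\<in>S. u i * v i)^2 \<le> (\<Sum>i\<in>S. u i ^ 2) * (\<Sum>i\<in>S. v i ^ 2)"
proof -
  have "0 \<le> (\<Sum>i\<in>S. \<Sum>j\<in>S. (u i * v j - u j * v i)^2)" by (intro sum_nonneg) auto
  also have "\<dots> = (\<Sum>i\<in>S. \<Sum>j\<in>S. u i^2 * v j^2) + (\<Sum>i\<in>S. \<Sum>j\<in>S. u j^2 * v i^2) - 2 * (\<Sum>i\<in>S. \<Sum>j\<in>S. (u i * v i) * (u j * v j))"
    by (simp add: sum_subtractf sum.distrib sum_distrib_left power2_eq_square algebra_simps)
  also have "(\<Sum>i\<in>S. \<Sum>j\<in>S. u i^2 * v j^2) = (\<Sum>i\<in>S. u i ^ 2) * (\<Sum>i\<in>S. v i ^ 2)"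
    by (simp add: sum_product)
  also have "(\<Sum>i\<in>S. \<Sum>j\<in>S. u j^2 * v i^2) = (\<Sum>i\<in>S. u i ^ 2) * (\<Sum>i\<in>S. v i ^ 2)"
    by (simp add: sum_product sum.swap[of "\<lambda>i j. u j^2 * v i^2"] mult.commute)
  also have "(\<Sum>i\<in>S. \<Sum>j\<in>S. (u i * v i) * (u j * v j)) = (\<Sum>i\<in>S. u i * v i)^2"
    by (simp add: sum_product power2_eq_square)
  finally show ?thesis by simp
qed

lemma powr_nonneg_prod:
  fixes x y a b :: real assumes "x > 0" "y > 0" "a \<ge> 0" "b \<ge> 0"
  shows "0 \<le> (x powr a - y powr a) * (x powr b - y powr b)"
proof (cases "x \<le> y")
  case True
  hence "x powr a \<le> y powr a" "x powr b \<le> y powr b" using assms by (auto intro: powr_mono2)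
  thus ?thesis by (simp add: mult_nonpos_nonpos)
next
  case False
  hence "y powr a \<le> x powr a" "y powr b \<le> x powr b" using assms by (auto intro: powr_mono2)
  thus ?thesis by simp
qed

definition fI :: "real \<Rightarrow> real \<Rightarrow> real \<Rightarrow> real \<Rightarrow> real" where
  "fI a b x y = x + x powr (a+b) * y powr (1-(a+b)) - x powr a * y powr (1-a) - x powr b * y powr (1-b)"
definition fJ :: "real \<Rightarrow> real \<Rightarrow> real \<Rightarrow> real \<Rightarrow> real" where
  "fJ a b x y = x + x powr (a+b) * y powr (1-(a+b)) + x powr a * y powr (1-a) + x powr b * y powr (1-b)"

lemma powr_mult3: "(x::real) > 0 \<Longrightarrow> x powr p * x powr q * x powr r = x powr (p+q+r)"
  by (simp add: powr_add)

lemma fI_sym: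
  fixes x y a b :: real assumes x: "x > 0" and y: "y > 0"
  shows "fI a b x y + fI a b y x = (x powr a - y powr a) * (x powr b - y powr b) * (x powr (1-(a+b)) + y powr (1-(a+b)))"
proof -
  have e1: "x powr a * x powr b * x powr (1-(a+b)) = x" using powr_mult3[OF x, of a b "1-(a+b)"] x by simp
  have e2: "y powr a * y powr b * y powr (1-(a+b)) = y" using powr_mult3[OF y, of a b "1-(a+b)"] y by simp
  have e3: "x powr a * x powr b = x powr (a+b)" by (simp add: powr_add)
  have e4: "y powr a * y powr b = y powr (a+b)" by (simp add: powr_add)
  have e5: "x powr a * x powr (1-(a+b)) = x powr (1-b)" by (simp add: powr_add[symmetric])
  have e6: "x powr b * x powr (1-(a+b)) = x powr (1-a)" by (simp add: powr_add[symmetric])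
  have e7: "y powr a * y powr (1-(a+b)) = y powr (1-b)" by (simp add: powr_add[symmetric])
  have e8: "y powr b * y powr (1-(a+b)) = y powr (1-a)" by (simp add: powr_add[symmetric])
  have e9: "x powr (a+b) * x powr (1-(a+b)) = x" using x by (simp add: powr_add[symmetric])
  have e10: "y powr (a+b) * y powr (1-(a+b)) = y" using y by (simp add: powr_add[symmetric])
  have "(x powr a - y powr a) * (x powr b - y powr b) * (x powr (1-(a+b)) + y powr (1-(a+b)))
     = (x powr a * x powr b * x powr (1-(a+b))) + (y powr a * y powr b * y powr (1-(a+b)))
       + (x powr a * x powr b) * y powr (1-(a+b)) + (y powr a * y powr b) * x powr (1-(a+b))
       - (x powr a * x powr (1-(a+b))) * y powr b - (x powr b * x powr (1-(a+b))) * y powr a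
       - (y powr b * y powr (1-(a+b))) * x powr a - (y powr a * y powr (1-(a+b))) * x powr b"
    by (simp add: algebra_simps)
  also have "\<dots> = fI a b x y + fI a b y x" unfolding e1 e2 e3 e4 e5 e6 e7 e8 fI_def by (simp add: algebra_simps e9 e10)
  finally show ?thesis by simp
qed

lemma fJ_sym:
  fixes x y a b :: real assumes x: "x > 0" and y: "y > 0"
  shows "fJ a b x y + fJ a b y x = (x powr a + y powr a) * (x powr b + y powr b) * (x powr (1-(a+b)) + y powr (1-(a+b)))"
proof -
  have e1: "x powr a * x powr b * x powr (1-(a+b)) = x" using powr_mult3[OF x, of a b "1-(a+b)"] x by simp
  have e2: "y powr a * y powr b * y powr (1-(a+b)) = y" using powr_mult3[OF y, of a b "1-(a+b)"] y by simp
  have e3: "x powr a * x powr b = x powr (a+b)" by (simp add: powr_add)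
  have e4: "y powr a * y powr b = y powr (a+b)" by (simp add: powr_add)
  have e5: "x powr a * x powr (1-(a+b)) = x powr (1-b)" by (simp add: powr_add[symmetric])
  have e6: "x powr b * x powr (1-(a+b)) = x powr (1-a)" by (simp add: powr_add[symmetric])
  have e7: "y powr a * y powr (1-(a+b)) = y powr (1-b)" by (simp add: powr_add[symmetric])
  have e8: "y powr b * y powr (1-(a+b)) = y powr (1-a)" by (simp add: powr_add[symmetric])
  have e9: "x powr (a+b) * x powr (1-(a+b)) = x" using x by (simp add: powr_add[symmetric])
  have e10: "y powr (a+b) * y powr (1-(a+b)) = y" using y by (simp add: powr_add[symmetric])
  have "(x powr a + y powr a) * (x powr b + y powr b) * (x powr (1-(a+b)) + y powr (1-(a+b)))
     = (x powr a * x powr b * x powr (1-(a+b))) + (y powr a * y powr b * y powr (1-(a+b)))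
       + (x powr a * x powr b) * y powr (1-(a+b)) + (y powr a * y powr b) * x powr (1-(a+b))
       + (x powr a * x powr (1-(a+b))) * y powr b + (x powr b * x powr (1-(a+b))) * y powr a
       + (y powr b * y powr (1-(a+b))) * x powr a + (y powr a * y powr (1-(a+b))) * x powr b"
    by (simp add: algebra_simps)
  also have "\<dots> = fJ a b x y + fJ a b y x" unfolding e1 e2 e3 e4 e5 e6 e7 e8 fJ_def by (simp add: algebra_simps e9 e10)
  finally show ?thesis by simp
qed

lemma sum_sym:
  fixes A :: "nat \<Rightarrow> nat \<Rightarrow> complex" and f :: "real \<Rightarrow> real \<Rightarrow> real"
  assumes herm: "\<And>i j. i < n \<Longrightarrow> j < n \<Longrightarrow> A j i = cnj (A i j)"
  shows "(\<Sum>i<n. \<Sum>j<n. cmod (A i j)^2 * f (d i) (d j))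
       = (\<Sum>i<n. \<Sum>j<n. cmod (A i j)^2 * (f (d i) (d j) + f (d j) (d i))) / 2"
proof -
  have c: "cmod (A j i) = cmod (A i j)" if "i < n" "j < n" for i j by (metis herm that complex_mod_cnj)
  have "(\<Sum>i<n. \<Sum>j<n. cmod (A i j)^2 * f (d j) (d i)) = (\<Sum>i<n. \<Sum>j<n. cmod (A i j)^2 * f (d i) (d j))"
    by (subst sum.swap) (intro sum.cong refl, simp add: c)
  then have "(\<Sum>i<n. \<Sum>j<n. cmod (A i j)^2 * (f (d i) (d j) + f (d j) (d i)))
     = 2 * (\<Sum>i<n. \<Sum>j<n. cmod (A i j)^2 * f (d i) (d j))"
    by (simp add: distrib_left sum.distrib)
  thus ?thesis by simp
qed

lemma abstract_half:
  fixes A B :: "nat \<Rightarrow> nat \<Rightarrow> complex" and d :: "nat \<Rightarrow> real" and a b :: real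
  assumes dpos: "\<And>i. i < n \<Longrightarrow> d i > 0"
    and hA: "\<And>i j. i < n \<Longrightarrow> j < n \<Longrightarrow> A j i = cnj (A i j)"
    and hB: "\<And>i j. i < n \<Longrightarrow> j < n \<Longrightarrow> B j i = cnj (B i j)"
    and a: "0 \<le> a" and b: "0 \<le> b" and cond: "a + b \<ge> 1 \<or> a + b \<le> 1/2"
  shows "a * b * cmod (\<Sum>i<n. \<Sum>j<n. complex_of_real (d i - d j) * A i j * B j i)^2
     \<le> ((\<Sum>i<n. \<Sum>j<n. cmod (A i j)^2 * fI a b (d i) (d j)) / 2) *
        ((\<Sum>i<n. \<Sum>j<n. cmod (B i j)^2 * fJ a b (d i) (d j)) / 2)"
proof -
  define S where "S = {..<n} \<times> {..<n}"
  have fS: "finite S" unfolding S_def by simp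
  define GI where "GI = (\<lambda>(i,j). fI a b (d i) (d j) + fI a b (d j) (d i))"
  define GJ where "GJ = (\<lambda>(i,j). fJ a b (d i) (d j) + fJ a b (d j) (d i))"
  have GI0: "GI p \<ge> 0" if pS: "p \<in> S" for p
  proof -
    obtain i j where p: "p = (i,j)" "i < n" "j < n" using pS unfolding S_def by (cases p) auto
    have "0 \<le> (d i powr a - d j powr a) * (d i powr b - d j powr b) * (d i powr (1-(a+b)) + d j powr (1-(a+b)))"
      using mult_nonneg_nonneg[OF powr_nonneg_prod[of "d i" "d j" a b], of "d i powr (1-(a+b)) + d j powr (1-(a+b))"] dpos p a b by auto
    thus ?thesis unfolding GI_def p using fI_sym dpos p by simp
  qed
  have GJ0: "GJ p \<ge> 0" if pS: "p \<in> S" for p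
  proof -
    obtain i j where p: "p = (i,j)" "i < n" "j < n" using pS unfolding S_def by (cases p) auto
    have "0 \<le> (d i powr a + d j powr a) * (d i powr b + d j powr b) * (d i powr (1-(a+b)) + d j powr (1-(a+b)))"
      by (intro mult_nonneg_nonneg add_nonneg_nonneg) auto
    thus ?thesis unfolding GJ_def p using fJ_sym dpos p by simp
  qed
  have key: "16 * a * b * (d i - d j)^2 \<le> GI (i,j) * GJ (i,j)" if "i < n" "j < n" for i j
    unfolding GI_def GJ_def using fI_sym fJ_sym key_xy[OF dpos[OF that(1)] dpos[OF that(2)] a b cond] dpos that by simp
  define u where "u = (\<lambda>p. sqrt (GI p) * cmod (A (fst p) (snd p)))"
  define v where "v = (\<lambda>p. sqrt (GJ p) * cmod (B (fst p) (snd p)))"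
  have symI: "(\<Sum>i<n. \<Sum>j<n. cmod (A i j)^2 * fI a b (d i) (d j)) = (\<Sum>p\<in>S. u p ^ 2) / 2"
  proof -
    have "(\<Sum>p\<in>S. u p ^ 2) = (\<Sum>i<n. \<Sum>j<n. u (i,j) ^ 2)" unfolding S_def by (simp add: sum.cartesian_product)
    also have "\<dots> = (\<Sum>i<n. \<Sum>j<n. cmod (A i j)^2 * (fI a b (d i) (d j) + fI a b (d j) (d i)))"
    proof (intro sum.cong refl)
      fix i j assume ij: "i \<in> {..<n}" "j \<in> {..<n}"
      hence "GI (i,j) \<ge> 0" using GI0 S_def by auto
      thus "u (i,j) ^ 2 = cmod (A i j)^2 * (fI a b (d i) (d j) + fI a b (d j) (d i))"
        unfolding u_def by (simp add: power_mult_distrib GI_def)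
    qed
    finally show ?thesis using sum_sym[of n A "fI a b" d, OF hA] by simp
  qed
  have symJ: "(\<Sum>i<n. \<Sum>j<n. cmod (B i j)^2 * fJ a b (d i) (d j)) = (\<Sum>p\<in>S. v p ^ 2) / 2"
  proof -
    have "(\<Sum>p\<in>S. v p ^ 2) = (\<Sum>i<n. \<Sum>j<n. v (i,j) ^ 2)" unfolding S_def by (simp add: sum.cartesian_product)
    also have "\<dots> = (\<Sum>i<n. \<Sum>j<n. cmod (B i j)^2 * (fJ a b (d i) (d j) + fJ a b (d j) (d i)))"
    proof (intro sum.cong refl)
      fix i j assume ij: "i \<in> {..<n}" "j \<in> {..<n}"
      hence "GJ (i,j) \<ge> 0" using GJ0 S_def by auto
      thus "v (i,j) ^ 2 = cmod (B i j)^2 * (fJ a b (d i) (d j) + fJ a b (d j) (d i))"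
        unfolding v_def by (simp add: power_mult_distrib GJ_def)
    qed
    finally show ?thesis using sum_sym[of n B "fJ a b" d, OF hB] by simp
  qed
  have cB: "cmod (B j i) = cmod (B i j)" if "i < n" "j < n" for i j by (metis hB that complex_mod_cnj)
  define T where "T = (\<Sum>i<n. \<Sum>j<n. complex_of_real (d i - d j) * A i j * B j i)"
  have T1: "cmod T \<le> (\<Sum>p\<in>S. \<bar>d (fst p) - d (snd p)\<bar> * cmod (A (fst p) (snd p)) * cmod (B (fst p) (snd p)))"
  proof -
    have "T = (\<Sum>p\<in>S. complex_of_real (d (fst p) - d (snd p)) * A (fst p) (snd p) * B (snd p) (fst p))"
      unfolding T_def S_def by (simp add: sum.cartesian_product split_def)
    also have "cmod \<dots> \<le> (\<Sum>p\<in>S. cmod (complex_of_real (d (fst p) - d (snd p)) * A (fst p) (snd p) * B (snd p) (fst p)))"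
      by (rule norm_sum)
    also have "\<dots> = (\<Sum>p\<in>S. \<bar>d (fst p) - d (snd p)\<bar> * cmod (A (fst p) (snd p)) * cmod (B (fst p) (snd p)))"
      by (intro sum.cong refl) (auto simp: S_def norm_mult cB simp del: of_real_diff)
    finally show ?thesis .
  qed
  have ab0: "0 \<le> a * b" using a b by simp
  have T2: "4 * sqrt (a*b) * cmod T \<le> (\<Sum>p\<in>S. u p * v p)"
  proof -
    have "4 * sqrt (a*b) * cmod T \<le> 4 * sqrt (a*b) * (\<Sum>p\<in>S. \<bar>d (fst p) - d (snd p)\<bar> * cmod (A (fst p) (snd p)) * cmod (B (fst p) (snd p)))"
      using T1 ab0 by (intro mult_left_mono) auto
    also have "\<dots> = (\<Sum>p\<in>S. (4 * sqrt (a*b) * \<bar>d (fst p) - d (snd p)\<bar>) * (cmod (A (fst p) (snd p)) * cmod (B (fst p) (snd p))))"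
      by (simp add: sum_distrib_left algebra_simps)
    also have "\<dots> \<le> (\<Sum>p\<in>S. sqrt (GI p * GJ p) * (cmod (A (fst p) (snd p)) * cmod (B (fst p) (snd p))))"
    proof (intro sum_mono mult_right_mono)
      fix p assume p: "p \<in> S"
      then obtain i j where ij: "p = (i,j)" "i < n" "j < n" unfolding S_def by auto
      have "sqrt ((4 * sqrt (a*b) * \<bar>d i - d j\<bar>)^2) \<le> sqrt (GI p * GJ p)"
        using key[OF ij(2,3)] ab0 unfolding ij(1) by (intro real_sqrt_le_mono) (simp add: power_mult_distrib)
      moreover have "sqrt ((4 * sqrt (a*b) * \<bar>d i - d j\<bar>)^2) = 4 * sqrt (a*b) * \<bar>d i - d j\<bar>"
        using ab0 by simp
      ultimately show "4 * sqrt (a*b) * \<bar>d (fst p) - d (snd p)\<bar> \<le> sqrt (GI p * GJ p)" using ij by simp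
    qed auto
    also have "\<dots> = (\<Sum>p\<in>S. u p * v p)"
      unfolding u_def v_def by (intro sum.cong refl) (simp add: real_sqrt_mult)
    finally show ?thesis .
  qed
  have "(4 * sqrt (a*b) * cmod T)^2 \<le> (\<Sum>p\<in>S. u p * v p)^2"
    using T2 ab0 by (intro power_mono) auto
  also have "\<dots> \<le> (\<Sum>p\<in>S. u p ^ 2) * (\<Sum>p\<in>S. v p ^ 2)" by (rule cauchy_schwarz_sum[OF fS])
  finally have "16 * (a*b) * cmod T ^2 \<le> (\<Sum>p\<in>S. u p ^ 2) * (\<Sum>p\<in>S. v p ^ 2)"
    using ab0 by (simp add: power_mult_distrib)
  thus ?thesis unfolding symI symJ T_def[symmetric] by simp
qed

lemma mult_entry:
  assumes "A \<in> carrier_mat nr k" "B \<in> carrier_mat k nc" "i < nr" "j < nc"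
  shows "(A * B) $$ (i,j) = (\<Sum>l<k. A $$ (i,l) * B $$ (l,j))"
  using assms by (auto simp: scalar_prod_def atLeast0LessThan intro!: sum.cong)

declare index_mult_mat(1)[simp del]

lemma dim_cadj[simp]: "dim_row (cadj A) = dim_col A" "dim_col (cadj A) = dim_row A"
  by (auto simp: cadj_def)

lemma cadj_carrier[simp]: "A \<in> carrier_mat r c \<Longrightarrow> cadj A \<in> carrier_mat c r"
  by (auto simp: cadj_def)

lemma cadj_index[simp]: "i < dim_col A \<Longrightarrow> j < dim_row A \<Longrightarrow> cadj A $$ (i,j) = cnj (A $$ (j,i))"
  by (auto simp: cadj_def)

lemma cadj_cadj[simp]: "cadj (cadj A) = A"
  by (rule eq_matI) auto

lemma cadj_mult:
  assumes "A \<in> carrier_mat n k" "B \<in> carrier_mat k m"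
  shows "cadj (A * B) = cadj B * cadj A"
proof (rule eq_matI)
  fix i j assume ij: "i < dim_row (cadj B * cadj A)" "j < dim_col (cadj B * cadj A)"
  hence i: "i < m" and j: "j < n" using assms by auto
  have "cadj (A * B) $$ (i,j) = cnj ((A*B) $$ (j,i))" using assms i j by simp
  also have "\<dots> = (\<Sum>l<k. cnj (A $$ (j,l)) * cnj (B $$ (l,i)))"
    using assms i j by (simp add: mult_entry[of A n k B m] cnj_sum del: index_mult_mat(1))
  also have "\<dots> = (cadj B * cadj A) $$ (i,j)"
    using assms i j by (subst mult_entry[of _ m k _ n]) (auto intro!: sum.cong)
  finally show "cadj (A * B) $$ (i, j) = (cadj B * cadj A) $$ (i, j)" .
qed (use assms in auto)

lemma cadj_one[simp]: "cadj (1\<^sub>m n) = 1\<^sub>m n"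
  by (rule eq_matI) auto

lemma cadj_diag_real: "cadj (mat_diag n (\<lambda>i. complex_of_real (d i))) = mat_diag n (\<lambda>i. complex_of_real (d i))"
  by (rule eq_matI) (auto simp: mat_diag_def)

lemma cadj_minus: "A \<in> carrier_mat n m \<Longrightarrow> B \<in> carrier_mat n m \<Longrightarrow> cadj (A - B) = cadj A - cadj B"
  by (rule eq_matI) auto

lemma cadj_smult: "cadj (c \<cdot>\<^sub>m A) = cnj c \<cdot>\<^sub>m cadj A"
  by (rule eq_matI) auto

lemma mtrace_comm:
  assumes "A \<in> carrier_mat n m" "B \<in> carrier_mat m n"
  shows "mtrace (A * B) = mtrace (B * A)"
proof -
  have "mtrace (A * B) = (\<Sum>i<n. \<Sum>l<m. A $$ (i,l) * B $$ (l,i))"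
    unfolding mtrace_def using assms by (simp add: mult_entry[of A n m B n] del: index_mult_mat(1))
  also have "\<dots> = (\<Sum>l<m. \<Sum>i<n. B $$ (l,i) * A $$ (i,l))"
    by (subst sum.swap) (simp add: mult.commute)
  also have "\<dots> = mtrace (B * A)"
    unfolding mtrace_def using assms by (simp add: mult_entry[of B m n A m] del: index_mult_mat(1))
  finally show ?thesis .
qed

lemma mtrace_cadj: "A \<in> carrier_mat n n \<Longrightarrow> mtrace (cadj A) = cnj (mtrace A)"
  unfolding mtrace_def by (simp add: cnj_sum)

lemma unitary_I:
  assumes "U \<in> carrier_mat n n" "U * cadj U = 1\<^sub>m n"
  shows "unitary_mat n U"
  using assms mat_mult_left_right_inverse[of U n "cadj U"] unfolding unitary_mat_def by auto

lemma unitary_I2: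
  assumes "U \<in> carrier_mat n n" "cadj U * U = 1\<^sub>m n"
  shows "unitary_mat n U"
  using assms mat_mult_left_right_inverse[of "cadj U" n U] unfolding unitary_mat_def by auto

lemma unitary_mult:
  assumes U: "unitary_mat n U" and V: "unitary_mat n V"
  shows "unitary_mat n (U * V)"
proof (rule unitary_I)
  have c: "U \<in> carrier_mat n n" "V \<in> carrier_mat n n" using U V unfolding unitary_mat_def by auto
  show "U * V \<in> carrier_mat n n" using c by simp
  have "U * V * cadj (U * V) = U * (V * cadj V) * cadj U"
    using c by (simp add: cadj_mult[of U n n V n] assoc_mult_mat[of _ n n _ n _ n] mult_carrier_mat[of _ n n _ n])
  also have "\<dots> = 1\<^sub>m n" using U V c unfolding unitary_mat_def by simp
  finally show "U * V * cadj (U * V) = 1\<^sub>m n" .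
qed

lemma diag_entry:
  assumes "X \<in> carrier_mat n n" "Y \<in> carrier_mat n n" "i < n" "j < n"
  shows "(X * mat_diag n f * cadj Y) $$ (i,j) = (\<Sum>k<n. X $$ (i,k) * f k * cnj (Y $$ (j,k)))"
proof -
  have "X * mat_diag n f = mat n n (\<lambda>(i,j). X $$ (i,j) * f j)"
    using assms by (simp add: mat_diag_mult_right)
  thus ?thesis using assms by (simp add: mult_entry[of _ n n _ n])
qed

lemma cadj_entry:
  assumes "X \<in> carrier_mat n n" "Y \<in> carrier_mat n n" "i < n" "j < n"
  shows "(X * cadj Y) $$ (i,j) = (\<Sum>k<n. X $$ (i,k) * cnj (Y $$ (j,k)))"
  using assms by (simp add: mult_entry[of _ n n _ n])

lemma cscalar_unfold:
  assumes "w \<in> carrier_vec n"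
  shows "v \<bullet>c w = (\<Sum>k<n. v $ k * cnj (w $ k))"
  using assms by (auto simp: scalar_prod_def atLeast0LessThan intro!: sum.cong)

lemma cscalar_self:
  assumes "w \<in> carrier_vec n"
  shows "w \<bullet>c w = complex_of_real (\<Sum>k<n. cmod (w $ k) ^ 2)"
  unfolding cscalar_unfold[OF assms] of_real_sum by (intro sum.cong refl) (metis complex_norm_square of_real_power)

lemma eigen_exists:
  fixes A :: "complex mat" assumes A: "A \<in> carrier_mat n n" and n: "n > 0"
  shows "\<exists>lam v. v \<in> carrier_vec n \<and> v \<noteq> 0\<^sub>v n \<and> A *\<^sub>v v = lam \<cdot>\<^sub>v v"
proof -
  obtain as where cp: "char_poly A = (\<Prod>a\<leftarrow>as. [:- a, 1:])" and len: "length as = n"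
    using char_poly_factorized[OF A] by blast
  then obtain a rest where as: "as = a # rest" using n by (cases as) auto
  have "poly (char_poly A) a = 0" unfolding cp as by simp
  hence "eigenvalue A a" using eigenvalue_root_char_poly[OF A] by simp
  from find_eigenvector[OF A this] show ?thesis unfolding eigenvector_def using A by auto
qed

lemma unit_completion:
  assumes v: "v \<in> carrier_vec n" and v0: "v \<noteq> 0\<^sub>v n"
  shows "\<exists>W c. unitary_mat n W \<and> (\<forall>k<n. W $$ (k,0) = c * v $ k)"
proof -
  define bc where "bc = basis_completion v"
  note bcf = vec_space.basis_completion[OF v v0, folded bc_def]
  define ws where "ws = gram_schmidt n bc"
  note gs = cof_vec_space.gram_schmidt_result[OF bcf(2) bcf(4) bcf(5) ws_def]
  have n: "n > 0" using v v0 by (cases n) auto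
  have lws: "length ws = n" using gs(4) bcf(6) by simp
  have wsc: "ws ! i \<in> carrier_vec n" if "i < n" for i using gs(3) lws that by auto
  have bc_cons: "bc = v # tl bc" using bcf(6,7) n by (cases bc) auto
  have ws0: "ws ! 0 = v"
  proof -
    have "hd ws = v" unfolding ws_def by (subst bc_cons) (rule cof_vec_space.gram_schmidt_hd[OF v])
    thus ?thesis using lws n by (cases ws) auto
  qed
  define N where "N = (\<lambda>i. sqrt (\<Sum>k<n. cmod (ws ! i $ k) ^ 2))"
  have orth: "ws ! j \<bullet>c ws ! i = (if i = j then complex_of_real (N i ^ 2) else 0)" if "i < n" "j < n" for i j
  proof (cases "i = j")
    case True
    thus ?thesis unfolding N_def using cscalar_self[OF wsc[OF that(1)]]
      by (simp add: sum_nonneg)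
  next
    case False
    thus ?thesis using corthogonalD[OF gs(2), of j i] lws that by auto
  qed
  have Npos: "N i > 0" if "i < n" for i
  proof -
    have "ws ! i \<bullet>c ws ! i \<noteq> 0" using corthogonalD[OF gs(2), of i i] lws that by auto
    hence "N i ^ 2 \<noteq> 0" using orth[OF that that] by auto
    moreover have "N i \<ge> 0" unfolding N_def by (auto intro!: sum_nonneg)
    ultimately show ?thesis by (simp add: less_le)
  qed
  define W where "W = mat n n (\<lambda>(k,i). ws ! i $ k / complex_of_real (N i))"
  have Wc: "W \<in> carrier_mat n n" unfolding W_def by simp
  have "cadj W * W = 1\<^sub>m n"
  proof (rule eq_matI)
    fix i j assume "i < dim_row (1\<^sub>m n)" "j < dim_col (1\<^sub>m n)"
    hence i: "i < n" and j: "j < n" by auto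
    have "(cadj W * W) $$ (i,j) = (\<Sum>k<n. cnj (W $$ (k,i)) * W $$ (k,j))"
      using Wc i j by (simp add: mult_entry[of _ n n _ n])
    also have "\<dots> = (\<Sum>k<n. ws ! j $ k * cnj (ws ! i $ k)) / (complex_of_real (N i) * complex_of_real (N j))"
      unfolding W_def using i j by (simp add: sum_divide_distrib algebra_simps)
    also have "\<dots> = (ws ! j \<bullet>c ws ! i) / (complex_of_real (N i) * complex_of_real (N j))"
      using cscalar_unfold[OF wsc[OF i]] by simp
    also have "\<dots> = 1\<^sub>m n $$ (i,j)"
      using orth[OF i j] Npos[OF i] i j by (auto simp: power2_eq_square)
    finally show "(cadj W * W) $$ (i,j) = 1\<^sub>m n $$ (i,j)" .
  qed (use Wc in auto)
  hence "unitary_mat n W" using unitary_I2[OF Wc] by simp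
  moreover have "\<forall>k<n. W $$ (k,0) = (1 / complex_of_real (N 0)) * v $ k"
    unfolding W_def using n ws0 by auto
  ultimately show ?thesis by blast
qed

lemma embed_entry:
  fixes U' :: "complex mat" and g :: "nat \<Rightarrow> complex"
  assumes U': "U' \<in> carrier_mat m m" and i: "i < Suc m" and j: "j < Suc m"
  defines "E \<equiv> mat (Suc m) (Suc m) (\<lambda>(i,j). if i = 0 \<and> j = 0 then 1 else if i = 0 \<or> j = 0 then 0 else U' $$ (i-1,j-1))"
  shows "(E * mat_diag (Suc m) g * cadj E) $$ (i,j) =
     (if i = 0 \<and> j = 0 then g 0 else if i = 0 \<or> j = 0 then 0
      else (U' * mat_diag m (\<lambda>k. g (Suc k)) * cadj U') $$ (i-1,j-1))"
proof -
  have Ec: "E \<in> carrier_mat (Suc m) (Suc m)" unfolding E_def by simp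
  have "(E * mat_diag (Suc m) g * cadj E) $$ (i,j) = (\<Sum>k<Suc m. E $$ (i,k) * g k * cnj (E $$ (j,k)))"
    by (rule diag_entry[OF Ec Ec i j])
  also have "\<dots> = E $$ (i,0) * g 0 * cnj (E $$ (j,0)) + (\<Sum>k<m. E $$ (i,Suc k) * g (Suc k) * cnj (E $$ (j,Suc k)))"
    by (simp only: sum.lessThan_Suc_shift)
  also have "\<dots> = (if i = 0 \<and> j = 0 then g 0 else if i = 0 \<or> j = 0 then 0
      else (U' * mat_diag m (\<lambda>k. g (Suc k)) * cadj U') $$ (i-1,j-1))"
  proof (cases i)
    case 0
    thus ?thesis using i j unfolding E_def by (cases j) auto
  next
    case (Suc i')
    show ?thesis
    proof (cases j)
      case 0 thus ?thesis using i j Suc unfolding E_def by auto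
    next
      case (Suc j')
      have "(U' * mat_diag m (\<lambda>k. g (Suc k)) * cadj U') $$ (i',j') = (\<Sum>k<m. U' $$ (i',k) * g (Suc k) * cnj (U' $$ (j',k)))"
        using i j \<open>i = Suc i'\<close> Suc by (intro diag_entry[OF U' U']) auto
      thus ?thesis using i j \<open>i = Suc i'\<close> Suc unfolding E_def by auto
    qed
  qed
  finally show ?thesis .
qed

lemma spectral:
  assumes "hermitian_mat n A"
  shows "\<exists>U d. unitary_mat n U \<and> A = U * mat_diag n (\<lambda>i. complex_of_real (d i)) * cadj U"
  using assms
proof (induction n arbitrary: A)
  case 0
  have A: "A \<in> carrier_mat 0 0" using 0 unfolding hermitian_mat_def by auto
  have "unitary_mat 0 (1\<^sub>m 0)" by (rule unitary_I) (auto intro!: eq_matI)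
  moreover have "A = 1\<^sub>m 0 * mat_diag 0 (\<lambda>i. complex_of_real 0) * cadj (1\<^sub>m 0)"
    using A by (intro eq_matI) auto
  ultimately show ?case by (intro exI[of _ "1\<^sub>m 0"] exI[of _ "\<lambda>_. 0::real"]) simp
next
  case (Suc m)
  have A: "A \<in> carrier_mat (Suc m) (Suc m)" and hA: "cadj A = A"
    using Suc.prems unfolding hermitian_mat_def by auto
  obtain lam v where v: "v \<in> carrier_vec (Suc m)" "v \<noteq> 0\<^sub>v (Suc m)" and Av: "A *\<^sub>v v = lam \<cdot>\<^sub>v v"
    using eigen_exists[OF A] by auto
  obtain W c where W: "unitary_mat (Suc m) W" and Wv: "\<forall>k<Suc m. W $$ (k,0) = c * v $ k"
    using unit_completion[OF v] by auto
  have Wc: "W \<in> carrier_mat (Suc m) (Suc m)" and WW: "W * cadj W = 1\<^sub>m (Suc m)" and WW2: "cadj W * W = 1\<^sub>m (Suc m)"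
    using W unfolding unitary_mat_def by auto
  note sq = assoc_mult_mat[of _ "Suc m" "Suc m" _ "Suc m" _ "Suc m"] mult_carrier_mat[of _ "Suc m" "Suc m" _ "Suc m"]
  define B where "B = cadj W * A * W"
  have Bc: "B \<in> carrier_mat (Suc m) (Suc m)" unfolding B_def using Wc A by (simp add: sq)
  have AW0: "(A * W) $$ (k,0) = lam * W $$ (k,0)" if k: "k < Suc m" for k
  proof -
    have "(A * W) $$ (k,0) = (\<Sum>l<Suc m. A $$ (k,l) * W $$ (l,0))"
      using A Wc k by (simp add: mult_entry[of _ "Suc m" "Suc m" _ "Suc m"])
    also have "\<dots> = c * (\<Sum>l<Suc m. A $$ (k,l) * v $ l)"
      using Wv by (simp add: sum_distrib_left algebra_simps)
    also have "(\<Sum>l<Suc m. A $$ (k,l) * v $ l) = (A *\<^sub>v v) $ k"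
      using A v k by (auto simp: scalar_prod_def atLeast0LessThan intro!: sum.cong)
    also have "\<dots> = lam * v $ k" using Av v k by simp
    finally show ?thesis using Wv k by simp
  qed
  have B0: "B $$ (i,0) = (if i = 0 then lam else 0)" if i: "i < Suc m" for i
  proof -
    have "B = cadj W * (A * W)" unfolding B_def using Wc A by (simp add: sq)
    hence "B $$ (i,0) = (\<Sum>k<Suc m. cadj W $$ (i,k) * (A * W) $$ (k,0))"
      using A Wc i by (simp add: mult_entry[of _ "Suc m" "Suc m" _ "Suc m"])
    also have "\<dots> = lam * (\<Sum>k<Suc m. cadj W $$ (i,k) * W $$ (k,0))"
      using AW0 by (simp add: sum_distrib_left algebra_simps)
    also have "(\<Sum>k<Suc m. cadj W $$ (i,k) * W $$ (k,0)) = (cadj W * W) $$ (i,0)"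
      using Wc i by (simp add: mult_entry[of _ "Suc m" "Suc m" _ "Suc m"])
    also have "\<dots> = (if i = 0 then 1 else 0)" using WW2 i by simp
    finally show ?thesis by simp
  qed
  have hB: "cadj B = B"
    unfolding B_def using Wc A hA by (simp add: cadj_mult[of _ "Suc m" "Suc m" _ "Suc m"] sq)
  have Bsym: "B $$ (j,i) = cnj (B $$ (i,j))" if "i < Suc m" "j < Suc m" for i j
  proof -
    have "cadj B $$ (j,i) = cnj (B $$ (i,j))" using Bc that by simp
    thus ?thesis using hB by simp
  qed
  have lamr: "lam = complex_of_real (Re lam)"
  proof -
    have h: "lam = cnj lam" using Bsym[of 0 0] B0[of 0] by simp
    have "Im lam = Im (cnj lam)" using h by (rule arg_cong)
    hence "Im lam = 0" by simp
    thus ?thesis by (simp add: complex_eq_iff)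
  qed
  define A' where "A' = mat m m (\<lambda>(i,j). B $$ (Suc i, Suc j))"
  have "cadj A' = A'"
  proof (rule eq_matI)
    fix i j assume "i < dim_row A'" "j < dim_col A'"
    hence i: "i < m" and j: "j < m" unfolding A'_def by auto
    show "cadj A' $$ (i,j) = A' $$ (i,j)"
      using Bsym[of "Suc j" "Suc i"] i j unfolding A'_def by simp
  qed (auto simp: A'_def)
  hence "hermitian_mat m A'" unfolding hermitian_mat_def A'_def by auto
  from Suc.IH[OF this] obtain U' d' where U': "unitary_mat m U'"
    and A'eq: "A' = U' * mat_diag m (\<lambda>i. complex_of_real (d' i)) * cadj U'" by blast
  have U'c: "U' \<in> carrier_mat m m" and UU': "U' * cadj U' = 1\<^sub>m m" using U' unfolding unitary_mat_def by auto
  define E where "E = mat (Suc m) (Suc m) (\<lambda>(i,j). if i = 0 \<and> j = 0 then 1 else if i = 0 \<or> j = 0 then 0 else U' $$ (i-1,j-1))"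
  define d where "d = (\<lambda>i. if i = 0 then Re lam else d' (i-1))"
  have Ec: "E \<in> carrier_mat (Suc m) (Suc m)" unfolding E_def by simp
  have "E * mat_diag (Suc m) (\<lambda>i. 1) * cadj E = 1\<^sub>m (Suc m)"
  proof (rule eq_matI)
    fix i j assume "i < dim_row (1\<^sub>m (Suc m))" "j < dim_col (1\<^sub>m (Suc m))"
    hence i: "i < Suc m" and j: "j < Suc m" by auto
    show "(E * mat_diag (Suc m) (\<lambda>i. 1) * cadj E) $$ (i,j) = 1\<^sub>m (Suc m) $$ (i,j)"
      unfolding E_def embed_entry[OF U'c i j]
      using i j UU' right_mult_one_mat[OF U'c] by (cases i; cases j) auto
  qed (use Ec in auto)
  hence "E * cadj E = 1\<^sub>m (Suc m)" using Ec by simp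
  hence E: "unitary_mat (Suc m) E" using unitary_I[OF Ec] by simp
  have BE: "B = E * mat_diag (Suc m) (\<lambda>i. complex_of_real (d i)) * cadj E"
  proof (rule eq_matI)
    fix i j assume "i < dim_row (E * mat_diag (Suc m) (\<lambda>i. complex_of_real (d i)) * cadj E)"
      "j < dim_col (E * mat_diag (Suc m) (\<lambda>i. complex_of_real (d i)) * cadj E)"
    hence i: "i < Suc m" and j: "j < Suc m" using Ec by auto
    have ent: "(E * mat_diag (Suc m) (\<lambda>i. complex_of_real (d i)) * cadj E) $$ (i,j) =
     (if i = 0 \<and> j = 0 then complex_of_real (d 0) else if i = 0 \<or> j = 0 then 0
      else (U' * mat_diag m (\<lambda>k. complex_of_real (d (Suc k))) * cadj U') $$ (i-1,j-1))"
      unfolding E_def by (rule embed_entry[OF U'c i j])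
    show "B $$ (i,j) = (E * mat_diag (Suc m) (\<lambda>i. complex_of_real (d i)) * cadj E) $$ (i,j)"
    proof (cases i)
      case 0
      thus ?thesis using ent B0 Bsym[of j 0] i j lamr unfolding d_def by (cases j) auto
    next
      case (Suc i')
      show ?thesis
      proof (cases j)
        case 0 thus ?thesis using ent B0 i Suc by auto
      next
        case (Suc j')
        have "B $$ (i,j) = A' $$ (i', j')" unfolding A'_def using i j Suc \<open>i = Suc i'\<close> by simp
        thus ?thesis using ent A'eq Suc \<open>i = Suc i'\<close> unfolding d_def by simp
      qed
    qed
  qed (use Bc Ec in auto)
  have AWB: "A = W * B * cadj W"
  proof -
    have "W * B * cadj W = (W * cadj W) * A * (W * cadj W)"
      unfolding B_def using Wc A by (simp add: sq)
    thus ?thesis using WW A by simp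
  qed
  define D where "D = mat_diag (Suc m) (\<lambda>i. complex_of_real (d i))"
  have Dc: "D \<in> carrier_mat (Suc m) (Suc m)" unfolding D_def by simp
  have "A = (W * E) * D * cadj (W * E)"
    unfolding AWB BE D_def[symmetric] using Wc Ec Dc by (simp add: cadj_mult[of _ "Suc m" "Suc m" _ "Suc m"] sq)
  moreover have "unitary_mat (Suc m) (W * E)" by (rule unitary_mult[OF W E])
  ultimately show ?case unfolding D_def by blast
qed

lemma unitary_cancel:
  assumes U: "unitary_mat n U" and X: "X \<in> carrier_mat n n"
  shows "cadj U * (U * X) = X" "U * (cadj U * X) = X"
proof -
  have Uc: "U \<in> carrier_mat n n" "U * cadj U = 1\<^sub>m n" "cadj U * U = 1\<^sub>m n" using U unfolding unitary_mat_def by auto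
  show "cadj U * (U * X) = X" using Uc X
    by (simp add: assoc_mult_mat[of _ n n _ n _ n, symmetric] left_mult_one_mat)
  show "U * (cadj U * X) = X" using Uc X
    by (simp add: assoc_mult_mat[of _ n n _ n _ n, symmetric] left_mult_one_mat)
qed

lemma diag_pos:
  assumes P: "posdef_mat n \<rho>" and U: "unitary_mat n U"
    and rho: "\<rho> = U * mat_diag n (\<lambda>i. complex_of_real (d i)) * cadj U" and i: "i < n"
  shows "d i > 0"
proof -
  have Uc: "U \<in> carrier_mat n n" "U * cadj U = 1\<^sub>m n" "cadj U * U = 1\<^sub>m n" using U unfolding unitary_mat_def by auto
  have rc: "\<rho> \<in> carrier_mat n n" using P unfolding posdef_mat_def hermitian_mat_def by auto
  note sq = assoc_mult_mat[of _ n n _ n _ n] mult_carrier_mat[of _ n n _ n] right_mult_one_mat[of _ n n]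
  define D where "D = mat_diag n (\<lambda>i. complex_of_real (d i))"
  have Dc: "D \<in> carrier_mat n n" unfolding D_def by simp
  have "cadj U * \<rho> * U = D"
    unfolding rho D_def[symmetric] using Uc Dc by (simp add: sq unitary_cancel[OF U])
  hence e1: "(cadj U * \<rho> * U) $$ (i,i) = complex_of_real (d i)" using i unfolding D_def by (simp add: mat_diag_def)
  have e2: "(cadj U * \<rho> * U) $$ (i,i) = qform n \<rho> (col U i)"
  proof -
    have cr: "cadj U * \<rho> \<in> carrier_mat n n" using Uc rc by (metis cadj_carrier mult_carrier_mat)
    have "(cadj U * \<rho> * U) $$ (i,i) = (\<Sum>l<n. (cadj U * \<rho>) $$ (i,l) * U $$ (l,i))"
      by (rule mult_entry[OF cr Uc(1) i i])
    also have "\<dots> = (\<Sum>l<n. (\<Sum>k<n. cnj (U $$ (k,i)) * \<rho> $$ (k,l)) * U $$ (l,i))"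
      using Uc rc i by (intro sum.cong refl) (simp add: mult_entry[of _ n n _ n])
    also have "\<dots> = (\<Sum>k<n. \<Sum>l<n. cnj (U $$ (k,i)) * \<rho> $$ (k,l) * U $$ (l,i))"
      by (simp add: sum_distrib_right) (rule sum.swap)
    also have "\<dots> = qform n \<rho> (col U i)"
      unfolding qform_def using Uc i by (intro sum.cong refl) simp
    finally show ?thesis .
  qed
  have nz: "col U i \<noteq> 0\<^sub>v n"
  proof
    assume c0: "col U i = 0\<^sub>v n"
    have "(cadj U * U) $$ (i,i) = (\<Sum>k<n. cnj (U $$ (k,i)) * U $$ (k,i))"
      using Uc(1) i by (simp add: mult_entry[of _ n n _ n])
    also have "\<dots> = 0"
    proof (intro sum.neutral ballI)
      fix k assume "k \<in> {..<n}"
      hence "col U i $ k = 0" using c0 by simp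
      hence "U $$ (k,i) = 0" using \<open>k \<in> {..<n}\<close> Uc i by simp
      thus "cnj (U $$ (k,i)) * U $$ (k,i) = 0" by simp
    qed
    finally have z: "(cadj U * U) $$ (i,i) = 0" .
    have "(cadj U * U) $$ (i,i) = 1" using Uc(3) i by simp
    thus False using z by simp
  qed
  have cv: "col U i \<in> carrier_vec n" using col_carrier_vec[OF i Uc(1)] .
  have "\<forall>v \<in> carrier_vec n. v \<noteq> 0\<^sub>v n \<longrightarrow> qform n \<rho> v \<in> \<real> \<and> Re (qform n \<rho> v) > 0"
    using P unfolding posdef_mat_def by blast
  hence "Re (qform n \<rho> (col U i)) > 0" using cv nz by blast
  thus ?thesis using e1 e2 by simp
qed

lemma diag_transfer:
  assumes U: "unitary_mat n U" and V: "unitary_mat n V"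
    and eq: "U * mat_diag n c * cadj U = V * mat_diag n e * cadj V"
    and FG: "\<And>i j. i < n \<Longrightarrow> j < n \<Longrightarrow> c j = e i \<Longrightarrow> F j = G i"
  shows "U * mat_diag n F * cadj U = V * mat_diag n G * cadj V"
proof -
  have Uc: "U \<in> carrier_mat n n" "U * cadj U = 1\<^sub>m n" "cadj U * U = 1\<^sub>m n" using U unfolding unitary_mat_def by auto
  have Vc: "V \<in> carrier_mat n n" "V * cadj V = 1\<^sub>m n" "cadj V * V = 1\<^sub>m n" using V unfolding unitary_mat_def by auto
  note sq = assoc_mult_mat[of _ n n _ n _ n] mult_carrier_mat[of _ n n _ n] right_mult_one_mat[of _ n n]
  define W where "W = cadj V * U"
  have Wc: "W \<in> carrier_mat n n" unfolding W_def using Uc Vc by (simp add: sq)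
  have WD: "W * mat_diag n c = mat_diag n e * W"
  proof -
    have "cadj V * (U * mat_diag n c * cadj U) * U = cadj V * (V * mat_diag n e * cadj V) * U" using eq by simp
    thus ?thesis unfolding W_def using Uc Vc by (simp add: sq unitary_cancel[OF U] unitary_cancel[OF V])
  qed
  have WF: "W * mat_diag n F = mat_diag n G * W"
  proof (rule eq_matI)
    fix i j assume "i < dim_row (mat_diag n G * W)" "j < dim_col (mat_diag n G * W)"
    hence i: "i < n" and j: "j < n" using Wc by (auto simp: mat_diag_def)
    have "(W * mat_diag n c) $$ (i,j) = (mat_diag n e * W) $$ (i,j)" using WD by simp
    hence "W $$ (i,j) * c j = e i * W $$ (i,j)" using Wc i j by (simp add: mat_diag_mult_left mat_diag_mult_right)
    hence "W $$ (i,j) = 0 \<or> c j = e i" by (auto simp: mult.commute)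
    hence "W $$ (i,j) * F j = G i * W $$ (i,j)" using FG[OF i j] by auto
    thus "(W * mat_diag n F) $$ (i,j) = (mat_diag n G * W) $$ (i,j)"
      using Wc i j by (simp add: mat_diag_mult_left mat_diag_mult_right)
  qed (use Wc in \<open>auto simp: mat_diag_def\<close>)
  have UVW: "U = V * W" unfolding W_def using Uc by (simp add: unitary_cancel[OF V])
  have "U * mat_diag n F * cadj U = V * (W * mat_diag n F) * cadj U"
    using Uc Vc Wc by (subst (1) UVW) (simp add: sq)
  also have "\<dots> = V * (mat_diag n G * W) * cadj U" unfolding WF ..
  also have "\<dots> = V * mat_diag n G * (cadj V * (U * cadj U))"
    unfolding W_def using Uc Vc by (simp add: sq)
  also have "\<dots> = V * mat_diag n G * cadj V" using Uc Vc by (simp add: sq)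
  finally show ?thesis .
qed

lemma mpow_eq:
  assumes U: "unitary_mat n U" and dpos: "\<forall>i<n. d i > 0"
    and rho: "\<rho> = U * mat_diag n (\<lambda>i. complex_of_real (d i)) * cadj U"
  shows "mpow n \<rho> t = U * mat_diag n (\<lambda>i. complex_of_real (d i powr t)) * cadj U"
proof -
  define P where "P = (\<lambda>M. \<exists>U d. unitary_mat n U \<and> (\<forall>i<n. d i > 0) \<and>
      \<rho> = U * mat_diag n (\<lambda>i. complex_of_real (d i)) * cadj U \<and>
      M = U * mat_diag n (\<lambda>i. complex_of_real (d i powr t)) * cadj U)"
  have "P (U * mat_diag n (\<lambda>i. complex_of_real (d i powr t)) * cadj U)"
    unfolding P_def using U dpos rho by blast
  hence "P (SOME M. P M)" by (rule someI)
  then obtain U' d' where U': "unitary_mat n U'" and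
    rho': "\<rho> = U' * mat_diag n (\<lambda>i. complex_of_real (d' i)) * cadj U'" and
    M: "(SOME M. P M) = U' * mat_diag n (\<lambda>i. complex_of_real (d' i powr t)) * cadj U'"
    unfolding P_def by blast
  have "mpow n \<rho> t = (SOME M. P M)" unfolding mpow_def P_def ..
  also have "\<dots> = U * mat_diag n (\<lambda>i. complex_of_real (d i powr t)) * cadj U"
    unfolding M by (rule diag_transfer[OF U' U]) (use rho rho' in auto)
  finally show ?thesis .
qed

lemma trace_form2:
  assumes K: "K \<in> carrier_mat n n" and L: "L \<in> carrier_mat n n"
  shows "mtrace (mat_diag n f * (K * L)) = (\<Sum>i<n. \<Sum>j<n. f i * K $$ (i,j) * L $$ (j,i))"
proof -
  have KL: "K * L \<in> carrier_mat n n" using K L by simp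
  have "mtrace (mat_diag n f * (K * L)) = (\<Sum>i<n. f i * (K * L) $$ (i,i))"
    unfolding mtrace_def using KL by (simp add: mat_diag_mult_left[OF KL])
  also have "\<dots> = (\<Sum>i<n. \<Sum>j<n. f i * K $$ (i,j) * L $$ (j,i))"
    using K L by (intro sum.cong refl) (simp add: mult_entry[of _ n n _ n] sum_distrib_left algebra_simps)
  finally show ?thesis .
qed

lemma mtrace_minus: "A \<in> carrier_mat n n \<Longrightarrow> B \<in> carrier_mat n n \<Longrightarrow> mtrace (A - B) = mtrace A - mtrace B"
  unfolding mtrace_def by (simp add: sum_subtractf)

lemma conj_back:
  assumes U: "unitary_mat n U" and X: "X \<in> carrier_mat n n"
  shows "X = U * (cadj U * X * U) * cadj U"
proof -
  have Uc: "U \<in> carrier_mat n n" "U * cadj U = 1\<^sub>m n" using U unfolding unitary_mat_def by auto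
  note sq = assoc_mult_mat[of _ n n _ n _ n] mult_carrier_mat[of _ n n _ n] right_mult_one_mat[of _ n n]
  show ?thesis using Uc X by (simp add: sq unitary_cancel[OF U])
qed

lemma conj_trace_prod:
  assumes U: "unitary_mat n U" and P: "P \<in> carrier_mat n n" and Q: "Q \<in> carrier_mat n n" and R: "R \<in> carrier_mat n n"
  shows "mtrace ((U * P * cadj U) * (U * Q * cadj U) * (U * R * cadj U) * (U * Q * cadj U)) = mtrace (P * (Q * (R * Q)))"
    and "mtrace ((U * P * cadj U) * ((U * Q * cadj U) * (U * R * cadj U))) = mtrace (P * (Q * R))"
proof -
  have Uc: "U \<in> carrier_mat n n" "U * cadj U = 1\<^sub>m n" "cadj U * U = 1\<^sub>m n" using U unfolding unitary_mat_def by auto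
  note sq = assoc_mult_mat[of _ n n _ n _ n] mult_carrier_mat[of _ n n _ n] right_mult_one_mat[of _ n n]
  have "(U * P * cadj U) * (U * Q * cadj U) * (U * R * cadj U) * (U * Q * cadj U) = U * (P * (Q * (R * (Q * cadj U))))"
    using Uc P Q R by (simp add: sq unitary_cancel[OF U])
  hence "mtrace ((U * P * cadj U) * (U * Q * cadj U) * (U * R * cadj U) * (U * Q * cadj U)) = mtrace ((P * (Q * (R * (Q * cadj U)))) * U)"
    using Uc P Q R by (simp add: sq mtrace_comm[of U n n])
  also have "(P * (Q * (R * (Q * cadj U)))) * U = P * (Q * (R * Q))"
    using Uc P Q R by (simp add: sq)
  finally show "mtrace ((U * P * cadj U) * (U * Q * cadj U) * (U * R * cadj U) * (U * Q * cadj U)) = mtrace (P * (Q * (R * Q)))" .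
  have "(U * P * cadj U) * ((U * Q * cadj U) * (U * R * cadj U)) = U * (P * (Q * (R * cadj U)))"
    using Uc P Q R by (simp add: sq unitary_cancel[OF U])
  hence "mtrace ((U * P * cadj U) * ((U * Q * cadj U) * (U * R * cadj U))) = mtrace ((P * (Q * (R * cadj U))) * U)"
    using Uc P Q R by (simp add: sq mtrace_comm[of U n n])
  also have "(P * (Q * (R * cadj U))) * U = P * (Q * R)"
    using Uc P Q R by (simp add: sq)
  finally show "mtrace ((U * P * cadj U) * ((U * Q * cadj U) * (U * R * cadj U))) = mtrace (P * (Q * R))" .
qed

lemma herm_trace_real:
  assumes rho: "hermitian_mat n \<rho>" and H: "hermitian_mat n H"
  shows "cnj (mtrace (\<rho> * H)) = mtrace (\<rho> * H)"
proof -
  have c: "\<rho> \<in> carrier_mat n n" "cadj \<rho> = \<rho>" "H \<in> carrier_mat n n" "cadj H = H"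
    using rho H unfolding hermitian_mat_def by auto
  have "cnj (mtrace (\<rho> * H)) = mtrace (cadj (\<rho> * H))" using c by (simp add: mtrace_cadj[of _ n])
  also have "\<dots> = mtrace (H * \<rho>)" using c by (simp add: cadj_mult[of _ n n _ n])
  also have "\<dots> = mtrace (\<rho> * H)" using c by (simp add: mtrace_comm[of _ n n])
  finally show ?thesis .
qed

lemma centered_herm:
  assumes rho: "hermitian_mat n \<rho>" and H: "hermitian_mat n H"
  shows "hermitian_mat n (centered n \<rho> H)"
proof -
  have c: "\<rho> \<in> carrier_mat n n" "H \<in> carrier_mat n n" "cadj H = H"
    using rho H unfolding hermitian_mat_def by auto
  have r: "cnj (mtrace (\<rho> * H)) = mtrace (\<rho> * H)" by (rule herm_trace_real[OF rho H])
  show ?thesis unfolding hermitian_mat_def centered_def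
    using c r by (auto simp: cadj_minus[of _ n n] cadj_smult intro: minus_carrier_mat)
qed

lemma conj_center:
  assumes U: "unitary_mat n U" and H: "H \<in> carrier_mat n n"
  shows "cadj U * (H - c \<cdot>\<^sub>m 1\<^sub>m n) * U = cadj U * H * U - c \<cdot>\<^sub>m 1\<^sub>m n"
proof -
  have Uc: "U \<in> carrier_mat n n" "U * cadj U = 1\<^sub>m n" "cadj U * U = 1\<^sub>m n" using U unfolding unitary_mat_def by auto
  have "cadj U * (H - c \<cdot>\<^sub>m 1\<^sub>m n) = cadj U * H - cadj U * (c \<cdot>\<^sub>m 1\<^sub>m n)"
    using Uc H by (intro mult_minus_distrib_mat[of _ n n]) auto
  also have "cadj U * (c \<cdot>\<^sub>m 1\<^sub>m n) = c \<cdot>\<^sub>m cadj U"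
    using Uc by (simp add: mult_smult_distrib[of _ n n _ n] right_mult_one_mat)
  finally have "cadj U * (H - c \<cdot>\<^sub>m 1\<^sub>m n) * U = (cadj U * H - c \<cdot>\<^sub>m cadj U) * U" by simp
  also have "\<dots> = cadj U * H * U - (c \<cdot>\<^sub>m cadj U) * U"
    using Uc H by (intro minus_mult_distrib_mat[of _ n n]) auto
  also have "(c \<cdot>\<^sub>m cadj U) * U = c \<cdot>\<^sub>m 1\<^sub>m n"
    using Uc by (simp add: mult_smult_assoc_mat[of _ n n _ n])
  finally show ?thesis .
qed

lemma quad_sum:
  fixes K :: "nat \<Rightarrow> nat \<Rightarrow> complex"
  assumes herm: "\<And>i j. i < n \<Longrightarrow> j < n \<Longrightarrow> K j i = cnj (K i j)"
  shows "(\<Sum>i<n. \<Sum>j<n. complex_of_real (p i j) * K i j * K j i) = complex_of_real (\<Sum>i<n. \<Sum>j<n. p i j * cmod (K i j) ^ 2)"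
  unfolding of_real_sum
proof (intro sum.cong refl)
  fix i j assume "i \<in> {..<n}" "j \<in> {..<n}"
  hence "K j i = cnj (K i j)" by (intro herm) auto
  hence e: "K i j * K j i = complex_of_real (cmod (K i j) ^ 2)" by (simp only: complex_norm_square)
  show "complex_of_real (p i j) * K i j * K j i = complex_of_real (p i j * cmod (K i j) ^ 2)"
    by (metis e mult.assoc of_real_mult)
qed

lemma skew_red:
  assumes U: "unitary_mat n U" and dpos: "\<forall>i<n. d i > 0"
    and rho: "\<rho> = U * mat_diag n (\<lambda>i. complex_of_real (d i)) * cadj U"
    and H0: "H0 \<in> carrier_mat n n"
    and herm: "\<And>i j. i < n \<Longrightarrow> j < n \<Longrightarrow> (cadj U * H0 * U) $$ (j,i) = cnj ((cadj U * H0 * U) $$ (i,j))"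
  shows "skewterm n \<rho> t H0 = complex_of_real (\<Sum>i<n. \<Sum>j<n. d i powr t * d j powr (1-t) * cmod ((cadj U * H0 * U) $$ (i,j)) ^ 2)"
    and "mtrace (\<rho> * (H0 * H0)) = complex_of_real (\<Sum>i<n. \<Sum>j<n. d i * cmod ((cadj U * H0 * U) $$ (i,j)) ^ 2)"
proof -
  have Uc: "U \<in> carrier_mat n n" using U unfolding unitary_mat_def by auto
  define K where "K = cadj U * H0 * U"
  have Kc: "K \<in> carrier_mat n n" unfolding K_def using Uc H0 by (metis cadj_carrier mult_carrier_mat)
  have HK: "H0 = U * K * cadj U" unfolding K_def by (rule conj_back[OF U H0])
  have hK: "\<And>i j. i < n \<Longrightarrow> j < n \<Longrightarrow> K $$ (j,i) = cnj (K $$ (i,j))" using herm unfolding K_def by blast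
  have "skewterm n \<rho> t H0 = mtrace ((U * mat_diag n (\<lambda>i. complex_of_real (d i powr t)) * cadj U) * (U * K * cadj U)
        * (U * mat_diag n (\<lambda>i. complex_of_real (d i powr (1-t))) * cadj U) * (U * K * cadj U))"
    unfolding skewterm_def mpow_eq[OF U dpos rho] by (subst HK)+ (rule refl)
  also have "\<dots> = mtrace (mat_diag n (\<lambda>i. complex_of_real (d i powr t)) * (K * (mat_diag n (\<lambda>i. complex_of_real (d i powr (1-t))) * K)))"
    by (rule conj_trace_prod(1)[OF U mat_diag_dim Kc mat_diag_dim])
  also have "\<dots> = (\<Sum>i<n. \<Sum>j<n. complex_of_real (d i powr t) * K $$ (i,j) * (mat_diag n (\<lambda>i. complex_of_real (d i powr (1-t))) * K) $$ (j,i))"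
    by (rule trace_form2[OF Kc]) (use Kc in \<open>metis mat_diag_dim mult_carrier_mat\<close>)
  also have "\<dots> = (\<Sum>i<n. \<Sum>j<n. complex_of_real (d i powr t * d j powr (1-t)) * K $$ (i,j) * K $$ (j,i))"
    using Kc by (intro sum.cong refl) (simp add: mat_diag_mult_left)
  also have "\<dots> = complex_of_real (\<Sum>i<n. \<Sum>j<n. d i powr t * d j powr (1-t) * cmod (K $$ (i,j)) ^ 2)"
    by (rule quad_sum[where K = "\<lambda>i j. K $$ (i,j)"]) (rule hK)
  finally show "skewterm n \<rho> t H0 = complex_of_real (\<Sum>i<n. \<Sum>j<n. d i powr t * d j powr (1-t) * cmod ((cadj U * H0 * U) $$ (i,j)) ^ 2)"
    unfolding K_def .
  have "mtrace (\<rho> * (H0 * H0)) = mtrace ((U * mat_diag n (\<lambda>i. complex_of_real (d i)) * cadj U) * ((U * K * cadj U) * (U * K * cadj U)))"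
    unfolding rho by (subst HK)+ (rule refl)
  also have "\<dots> = mtrace (mat_diag n (\<lambda>i. complex_of_real (d i)) * (K * K))"
    by (rule conj_trace_prod(2)[OF U mat_diag_dim Kc Kc])
  also have "\<dots> = (\<Sum>i<n. \<Sum>j<n. complex_of_real (d i) * K $$ (i,j) * K $$ (j,i))"
    by (rule trace_form2[OF Kc Kc])
  also have "\<dots> = complex_of_real (\<Sum>i<n. \<Sum>j<n. d i * cmod (K $$ (i,j)) ^ 2)"
    by (rule quad_sum[where K = "\<lambda>i j. K $$ (i,j)"]) (rule hK)
  finally show "mtrace (\<rho> * (H0 * H0)) = complex_of_real (\<Sum>i<n. \<Sum>j<n. d i * cmod ((cadj U * H0 * U) $$ (i,j)) ^ 2)"
    unfolding K_def .
qed

lemma IJ_red: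
  assumes U: "unitary_mat n U" and dpos: "\<forall>i<n. d i > 0"
    and rho: "\<rho> = U * mat_diag n (\<lambda>i. complex_of_real (d i)) * cadj U"
    and hr: "hermitian_mat n \<rho>" and hH: "hermitian_mat n H"
  defines "K \<equiv> cadj U * centered n \<rho> H * U"
  shows "Ifun n \<rho> a b H = (\<Sum>i<n. \<Sum>j<n. cmod (K $$ (i,j))^2 * fI a b (d i) (d j)) / 2"
    and "Jfun n \<rho> a b H = (\<Sum>i<n. \<Sum>j<n. cmod (K $$ (i,j))^2 * fJ a b (d i) (d j)) / 2"
    and "\<And>i j. i < n \<Longrightarrow> j < n \<Longrightarrow> K $$ (j,i) = cnj (K $$ (i,j))"
proof -
  define H0 where "H0 = centered n \<rho> H"
  have hH0: "hermitian_mat n H0" unfolding H0_def by (rule centered_herm[OF hr hH])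
  have H0c: "H0 \<in> carrier_mat n n" and cH0: "cadj H0 = H0" using hH0 unfolding hermitian_mat_def by auto
  have Uc: "U \<in> carrier_mat n n" using U unfolding unitary_mat_def by auto
  have Kc: "K \<in> carrier_mat n n" unfolding K_def H0_def[symmetric] using Uc H0c by (metis cadj_carrier mult_carrier_mat)
  have cK: "cadj K = K" unfolding K_def H0_def[symmetric] using Uc H0c cH0
    by (simp add: cadj_mult[of _ n n _ n] assoc_mult_mat[of _ n n _ n _ n] mult_carrier_mat[of _ n n _ n])
  show hK: "\<And>i j. i < n \<Longrightarrow> j < n \<Longrightarrow> K $$ (j,i) = cnj (K $$ (i,j))"
  proof -
    fix i j assume "i < n" "j < n"
    hence "cadj K $$ (j,i) = cnj (K $$ (i,j))" using Kc by simp
    thus "K $$ (j,i) = cnj (K $$ (i,j))" using cK by simp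
  qed
  have hK': "\<And>i j. i < n \<Longrightarrow> j < n \<Longrightarrow> (cadj U * H0 * U) $$ (j,i) = cnj ((cadj U * H0 * U) $$ (i,j))"
    using hK unfolding K_def H0_def .
  have KH: "cadj U * H0 * U = K" unfolding K_def H0_def ..
  define S0 where "S0 = (\<Sum>i<n. \<Sum>j<n. d i * cmod (K $$ (i,j)) ^ 2)"
  define S where "S = (\<lambda>t. \<Sum>i<n. \<Sum>j<n. d i powr t * d j powr (1-t) * cmod (K $$ (i,j)) ^ 2)"
  have e0: "mtrace (\<rho> * (H0 * H0)) = complex_of_real S0"
    using skew_red(2)[OF U dpos rho H0c hK'] unfolding KH S0_def .
  have es: "skewterm n \<rho> t H0 = complex_of_real (S t)" for t
    using skew_red(1)[OF U dpos rho H0c hK', of t] unfolding KH S_def by simp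
  have I1: "Ifun n \<rho> a b H = (S0 + S (a+b) - S a - S b) / 2"
    unfolding Ifun_def Let_def H0_def[symmetric] e0 es by simp
  have J1: "Jfun n \<rho> a b H = (S0 + S (a+b) + S a + S b) / 2"
    unfolding Jfun_def Let_def H0_def[symmetric] e0 es by simp
  show "Ifun n \<rho> a b H = (\<Sum>i<n. \<Sum>j<n. cmod (K $$ (i,j))^2 * fI a b (d i) (d j)) / 2"
    unfolding I1 S0_def S_def fI_def
    by (simp add: sum.distrib sum_subtractf algebra_simps)
  show "Jfun n \<rho> a b H = (\<Sum>i<n. \<Sum>j<n. cmod (K $$ (i,j))^2 * fJ a b (d i) (d j)) / 2"
    unfolding J1 S0_def S_def fJ_def
    by (simp add: sum.distrib algebra_simps)
qed

lemma comm_red: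
  assumes U: "unitary_mat n U"
    and rho: "\<rho> = U * mat_diag n (\<lambda>i. complex_of_real (d i)) * cadj U"
    and hr: "hermitian_mat n \<rho>" and hA: "hermitian_mat n A" and hB: "hermitian_mat n B"
  defines "KA \<equiv> cadj U * centered n \<rho> A * U" and "KB \<equiv> cadj U * centered n \<rho> B * U"
  shows "mtrace (\<rho> * (A * B - B * A)) = (\<Sum>i<n. \<Sum>j<n. complex_of_real (d i - d j) * KA $$ (i,j) * KB $$ (j,i))"
proof -
  have Uc: "U \<in> carrier_mat n n" using U unfolding unitary_mat_def by auto
  have Ac: "A \<in> carrier_mat n n" and Bc: "B \<in> carrier_mat n n" and rc: "\<rho> \<in> carrier_mat n n"
    using hA hB hr unfolding hermitian_mat_def by auto
  note sq = assoc_mult_mat[of _ n n _ n _ n] mult_carrier_mat[of _ n n _ n]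
  define Ah where "Ah = cadj U * A * U"
  define Bh where "Bh = cadj U * B * U"
  have Ahc: "Ah \<in> carrier_mat n n" unfolding Ah_def using Uc Ac by (simp add: sq)
  have Bhc: "Bh \<in> carrier_mat n n" unfolding Bh_def using Uc Bc by (simp add: sq)
  have AA: "A = U * Ah * cadj U" unfolding Ah_def by (rule conj_back[OF U Ac])
  have BB: "B = U * Bh * cadj U" unfolding Bh_def by (rule conj_back[OF U Bc])
  define D where "D = mat_diag n (\<lambda>i. complex_of_real (d i))"
  have Dc: "D \<in> carrier_mat n n" unfolding D_def by simp
  have t1: "mtrace (\<rho> * (A * B)) = (\<Sum>i<n. \<Sum>j<n. complex_of_real (d i) * Ah $$ (i,j) * Bh $$ (j,i))"
  proof -
    have "mtrace (\<rho> * (A * B)) = mtrace ((U * D * cadj U) * ((U * Ah * cadj U) * (U * Bh * cadj U)))"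
      unfolding rho D_def[symmetric] by (subst AA, subst BB) (rule refl)
    also have "\<dots> = mtrace (D * (Ah * Bh))" by (rule conj_trace_prod(2)[OF U Dc Ahc Bhc])
    also have "\<dots> = (\<Sum>i<n. \<Sum>j<n. complex_of_real (d i) * Ah $$ (i,j) * Bh $$ (j,i))"
      unfolding D_def by (rule trace_form2[OF Ahc Bhc])
    finally show ?thesis .
  qed
  have t2: "mtrace (\<rho> * (B * A)) = (\<Sum>i<n. \<Sum>j<n. complex_of_real (d j) * Ah $$ (i,j) * Bh $$ (j,i))"
  proof -
    have "mtrace (\<rho> * (B * A)) = mtrace ((U * D * cadj U) * ((U * Bh * cadj U) * (U * Ah * cadj U)))"
      unfolding rho D_def[symmetric] by (subst AA, subst BB) (rule refl)
    also have "\<dots> = mtrace (D * (Bh * Ah))" by (rule conj_trace_prod(2)[OF U Dc Bhc Ahc])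
    also have "\<dots> = (\<Sum>i<n. \<Sum>j<n. complex_of_real (d i) * Bh $$ (i,j) * Ah $$ (j,i))"
      unfolding D_def by (rule trace_form2[OF Bhc Ahc])
    also have "\<dots> = (\<Sum>i<n. \<Sum>j<n. complex_of_real (d j) * Ah $$ (i,j) * Bh $$ (j,i))"
      by (subst sum.swap) (simp add: algebra_simps)
    finally show ?thesis .
  qed
  have "mtrace (\<rho> * (A * B - B * A)) = mtrace (\<rho> * (A * B)) - mtrace (\<rho> * (B * A))"
  proof -
    have "\<rho> * (A * B - B * A) = \<rho> * (A * B) - \<rho> * (B * A)"
      using rc Ac Bc by (intro mult_minus_distrib_mat[of _ n n]) (auto simp: sq)
    thus ?thesis using rc Ac Bc by (simp add: mtrace_minus[of _ n] sq)
  qed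
  also have "\<dots> = (\<Sum>i<n. \<Sum>j<n. complex_of_real (d i - d j) * Ah $$ (i,j) * Bh $$ (j,i))"
    unfolding t1 t2 by (simp add: sum_subtractf[symmetric] algebra_simps)
  also have "\<dots> = (\<Sum>i<n. \<Sum>j<n. complex_of_real (d i - d j) * KA $$ (i,j) * KB $$ (j,i))"
  proof (intro sum.cong refl)
    fix i j assume i: "i \<in> {..<n}" and j: "j \<in> {..<n}"
    have KA: "KA = Ah - mtrace (\<rho> * A) \<cdot>\<^sub>m 1\<^sub>m n"
      unfolding KA_def Ah_def centered_def by (rule conj_center[OF U Ac])
    have KB: "KB = Bh - mtrace (\<rho> * B) \<cdot>\<^sub>m 1\<^sub>m n"
      unfolding KB_def Bh_def centered_def by (rule conj_center[OF U Bc])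
    show "complex_of_real (d i - d j) * Ah $$ (i,j) * Bh $$ (j,i) = complex_of_real (d i - d j) * KA $$ (i,j) * KB $$ (j,i)"
    proof (cases "i = j")
      case True thus ?thesis by simp
    next
      case False
      thus ?thesis unfolding KA KB using i j by simp
    qed
  qed
  finally show ?thesis .
qed

theorem theorem3p1:
  fixes n :: nat and \<rho> A B :: "complex mat" and \<alpha> \<beta> :: real
  assumes "density_mat n \<rho>"
    and "hermitian_mat n A" and "hermitian_mat n B"
    and "\<alpha> \<ge> 0" and "\<beta> \<ge> 0"
    and "\<alpha> + \<beta> \<ge> 1 \<or> \<alpha> + \<beta> \<le> 1/2"
  shows "Ufun n \<rho> \<alpha> \<beta> A * Ufun n \<rho> \<alpha> \<beta> B
           \<ge> \<alpha> * \<beta> * (cmod (mtrace (\<rho> * (A * B - B * A))))\<^sup>2"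
proof -
  have P: "posdef_mat n \<rho>" using assms(1) unfolding density_mat_def by auto
  hence hr: "hermitian_mat n \<rho>" unfolding posdef_mat_def by auto
  obtain U d where U: "unitary_mat n U" and rho: "\<rho> = U * mat_diag n (\<lambda>i. complex_of_real (d i)) * cadj U"
    using spectral[OF hr] by blast
  have dpos: "\<forall>i<n. d i > 0" using diag_pos[OF P U rho] by blast
  define KA where "KA = cadj U * centered n \<rho> A * U"
  define KB where "KB = cadj U * centered n \<rho> B * U"
  note RA1 = IJ_red(1)[OF U dpos rho hr assms(2), where a=\<alpha> and b=\<beta>, folded KA_def]
  note RA2 = IJ_red(2)[OF U dpos rho hr assms(2), where a=\<alpha> and b=\<beta>, folded KA_def]
  note RA3 = IJ_red(3)[OF U dpos rho hr assms(2), folded KA_def]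
  note RB1 = IJ_red(1)[OF U dpos rho hr assms(3), where a=\<alpha> and b=\<beta>, folded KB_def]
  note RB2 = IJ_red(2)[OF U dpos rho hr assms(3), where a=\<alpha> and b=\<beta>, folded KB_def]
  note RB3 = IJ_red(3)[OF U dpos rho hr assms(3), folded KB_def]
  define T where "T = mtrace (\<rho> * (A * B - B * A))"
  have T: "T = (\<Sum>i<n. \<Sum>j<n. complex_of_real (d i - d j) * KA $$ (i,j) * KB $$ (j,i))"
    unfolding T_def KA_def KB_def by (rule comm_red[OF U rho hr assms(2,3)])
  have T': "(\<Sum>i<n. \<Sum>j<n. complex_of_real (d i - d j) * KB $$ (i,j) * KA $$ (j,i)) = - T"
    unfolding T by (subst sum.swap) (simp add: sum_negf[symmetric] algebra_simps)
  define IA where "IA = Ifun n \<rho> \<alpha> \<beta> A"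
  define JA where "JA = Jfun n \<rho> \<alpha> \<beta> A"
  define IB where "IB = Ifun n \<rho> \<alpha> \<beta> B"
  define JB where "JB = Jfun n \<rho> \<alpha> \<beta> B"
  have dpos': "\<And>i. i < n \<Longrightarrow> d i > 0" using dpos by auto
  have h1: "\<alpha> * \<beta> * cmod T ^ 2 \<le> IA * JB"
    using abstract_half[of n d "\<lambda>i j. KA $$ (i,j)" "\<lambda>i j. KB $$ (i,j)" \<alpha> \<beta>, OF dpos' RA3 RB3 assms(4,5,6)]
    unfolding IA_def JB_def RA1 RB2 T[symmetric] .
  have h2: "\<alpha> * \<beta> * cmod T ^ 2 \<le> IB * JA"
    using abstract_half[of n d "\<lambda>i j. KB $$ (i,j)" "\<lambda>i j. KA $$ (i,j)" \<alpha> \<beta>, OF dpos' RB3 RA3 assms(4,5,6)]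
    unfolding IB_def JA_def RB1 RA2 T' by simp
  have z: "0 \<le> \<alpha> * \<beta> * cmod T ^ 2" using assms(4,5) by simp
  have "(\<alpha> * \<beta> * cmod T ^ 2) * (\<alpha> * \<beta> * cmod T ^ 2) \<le> (IA * JB) * (IB * JA)"
    using mult_mono[OF h1 h2 _ z] h1 z by linarith
  hence "sqrt ((\<alpha> * \<beta> * cmod T ^ 2)^2) \<le> sqrt ((IA * JA) * (IB * JB))"
    by (intro real_sqrt_le_mono) (simp add: power2_eq_square algebra_simps)
  hence "\<alpha> * \<beta> * cmod T ^ 2 \<le> sqrt (IA * JA) * sqrt (IB * JB)"
    using z by (simp add: real_sqrt_mult)
  thus ?thesis unfolding Ufun_def IA_def JA_def IB_def JB_def T_def .
qed

end
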